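(* There exists a minimal, weakly mixing homeomorphism $T\colon X\to X$ of a Cantor set $X$ which is conjugate to a homeomorphism $f\colon K\to K$ of a Cantor set $K\subseteq\mathbb{R}$ satisfying $f'(x)=0$ for every $x\in K$.
   Context: A Cantor set is a compact metric space that is totally disconnected and has no isolated points. $(X,T)$ is minimal if $X$ has no nonempty proper closed subset $A$ with $T(A)=A$; transitive if for all nonempty open $U,V\subseteq X$ there is $n\in\mathbb{N}$ with $T^n(U)\cap V\neq\emptyset$; weakly mixing if $(X\times X,T\times T)$ is transitive. Conjugacy means there is a homeomorphism $h\colon X\to K$ with $h\circ T=f\circ h$. For $K\subseteq\mathbb{R}$ perfect, $f'(x)=\lim_{y\to x,\,y\in K\setminus\{x\}}\frac{f(y)-f(x)}{y-x}$. *)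

theory Defs
  imports "HOL-Analysis.Analysis"
begin

definition totally_disconnected :: "'a::topological_space set \<Rightarrow> bool" where
  "totally_disconnected X \<longleftrightarrow>
     (\<forall>C. C \<subseteq> X \<and> connected C \<longrightarrow> (\<forall>a\<in>C. \<forall>b\<in>C. a = b))"

definition cantor_set :: "'a::metric_space set \<Rightarrow> bool" where
  "cantor_set X \<longleftrightarrow> X \<noteq> {} \<and> compact X \<and> totally_disconnected X \<and> (\<forall>x\<in>X. x islimpt X)"

definition homeo_of :: "'a::topological_space set \<Rightarrow> ('a \<Rightarrow> 'a) \<Rightarrow> bool" where
  "homeo_of X T \<longleftrightarrow> (\<exists>S. homeomorphism X X T S)"

definition minimal_sys :: "'a::topological_space set \<Rightarrow> ('a \<Rightarrow> 'a) \<Rightarrow> bool" where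
  "minimal_sys X T \<longleftrightarrow>
     \<not> (\<exists>A. A \<noteq> {} \<and> A \<subset> X \<and> closedin (top_of_set X) A \<and> T ` A = A)"

definition transitive_sys :: "'a::topological_space set \<Rightarrow> ('a \<Rightarrow> 'a) \<Rightarrow> bool" where
  "transitive_sys X T \<longleftrightarrow>
     (\<forall>U V. openin (top_of_set X) U \<and> U \<noteq> {} \<and> openin (top_of_set X) V \<and> V \<noteq> {}
        \<longrightarrow> (\<exists>n::nat. n \<ge> 1 \<and> (T ^^ n) ` U \<inter> V \<noteq> {}))"

definition weakly_mixing :: "'a::topological_space set \<Rightarrow> ('a \<Rightarrow> 'a) \<Rightarrow> bool" where
  "weakly_mixing X T \<longleftrightarrow> transitive_sys (X \<times> X) (\<lambda>(x, y). (T x, T y))"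

definition conjugate ::
  "'a::topological_space set \<Rightarrow> ('a \<Rightarrow> 'a) \<Rightarrow> 'b::topological_space set \<Rightarrow> ('b \<Rightarrow> 'b) \<Rightarrow> bool" where
  "conjugate X T K f \<longleftrightarrow>
     (\<exists>h g. homeomorphism X K h g \<and> (\<forall>x\<in>X. h (T x) = f (h x)))"

text \<open>Derivative relative to a perfect set \<open>K \<subseteq> \<real>\<close>: limit of difference quotients
  as \<open>y \<to> x\<close> with \<open>y \<in> K - {x}\<close> (the filter \<open>at x within K\<close> excludes \<open>x\<close>).\<close>
definition has_rel_deriv :: "(real \<Rightarrow> real) \<Rightarrow> real set \<Rightarrow> real \<Rightarrow> real \<Rightarrow> bool" where
  "has_rel_deriv f K x d \<longleftrightarrow> ((\<lambda>y. (f y - f x) / (y - x)) \<longlongrightarrow> d) (at x within K)"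

end

theory Submission
  imports Defs "HOL-Analysis.Analysis"
begin


definition Wd :: "nat \<Rightarrow> nat \<Rightarrow> nat list" where
  "Wd n a = (if a = 1 then replicate (n+1) 0 @ replicate (n+2) 1 @ [2]
             else replicate (n+2) 0 @ replicate (n+1) 1 @ [2])"

fun Ht :: "nat \<Rightarrow> nat \<Rightarrow> nat" where
  "Ht 0 a = (if a = 1 then 2 else 1)"
| "Ht (Suc n) a = sum_list (map (Ht n) (Wd n a))"

fun loc :: "(nat \<Rightarrow> nat) \<Rightarrow> nat list \<Rightarrow> nat \<Rightarrow> nat \<times> nat" where
  "loc h [] j = (0, j)"
| "loc h (c # cs) j = (if j < h c then (c, j) else loc h cs (j - h c))"

definition psum :: "(nat \<Rightarrow> nat) \<Rightarrow> nat list \<Rightarrow> nat \<Rightarrow> nat" where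
  "psum h ws k = sum_list (map h (take k ws))"

lemma loc_pos:
  assumes "k < length ws" "i < h (ws ! k)"
  shows "loc h ws (psum h ws k + i) = (ws ! k, i)"
  using assms
proof (induction ws arbitrary: k)
  case Nil then show ?case by simp
next
  case (Cons c cs)
  show ?case
  proof (cases k)
    case 0 then show ?thesis using Cons by (simp add: psum_def)
  next
    case (Suc k')
    have "psum h (c # cs) k + i = h c + (psum h cs k' + i)"
      using Suc by (simp add: psum_def)
    then show ?thesis using Cons Suc by simp
  qed
qed

lemma loc_dec:
  assumes "j < sum_list (map h ws)"
  shows "\<exists>k i. k < length ws \<and> i < h (ws ! k) \<and> j = psum h ws k + i"
  using assms
proof (induction ws arbitrary: j)
  case Nil then show ?case by simp
next
  case (Cons c cs)
  show ?case
  proof (cases "j < h c")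
    case True
    then show ?thesis by (intro exI[of _ 0] exI[of _ j]) (simp add: psum_def)
  next
    case False
    then have "j - h c < sum_list (map h cs)" using Cons.prems by simp
    then obtain k i where "k < length cs" "i < h (cs ! k)" "j - h c = psum h cs k + i"
      using Cons.IH by blast
    then show ?thesis using False
      by (intro exI[of _ "Suc k"] exI[of _ i]) (auto simp: psum_def)
  qed
qed

lemma psum_Suc:
  assumes "k < length ws"
  shows "psum h ws (Suc k) = psum h ws k + h (ws ! k)"
  using assms by (simp add: psum_def take_Suc_conv_app_nth)

lemma psum_le:
  assumes "k < length ws"
  shows "psum h ws k + h (ws ! k) \<le> sum_list (map h ws)"
proof -
  have "sum_list (map h ws) = sum_list (map h (take (Suc k) ws)) + sum_list (map h (drop (Suc k) ws))"
    by (metis append_take_drop_id map_append sum_list_append)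
  then show ?thesis using psum_Suc[OF assms, of h] by (simp add: psum_def)
qed

lemma psum_mono:
  assumes "k \<le> l"
  shows "psum h ws k \<le> psum h ws l"
proof -
  have "take l ws = take k ws @ take (l - k) (drop k ws)"
    using assms by (metis le_add_diff_inverse take_add)
  then show ?thesis by (simp add: psum_def)
qed


lemma Wd_len: "length (Wd n a) = 2*n + 4"
  by (simp add: Wd_def)

lemma Wd_set: "x \<in> set (Wd n a) \<Longrightarrow> x < 3"
  by (auto simp: Wd_def split: if_splits)

lemma Wd_nth_lt3: "k < length (Wd n a) \<Longrightarrow> Wd n a ! k < 3"
  using Wd_set nth_mem by blast

lemma Wd_0: "Wd n a ! 0 = 0"
  by (simp add: Wd_def)

lemma Wd_split: "\<exists>xs. Wd n a = xs @ [2] \<and> 2 \<notin> set xs \<and> length xs = 2*n+3"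
proof -
  define xs :: "nat list" where "xs = (if a = 1 then replicate (n+1) 0 @ replicate (n+2) 1
             else replicate (n+2) 0 @ replicate (n+1) 1)"
  have "Wd n a = xs @ [2]" by (simp add: Wd_def xs_def)
  moreover have "2 \<notin> set xs" by (simp add: xs_def)
  moreover have "length xs = 2*n+3" by (simp add: xs_def)
  ultimately show ?thesis by blast
qed

lemma Wd_last: "Wd n a ! (2*n+3) = 2"
proof -
  obtain xs where "Wd n a = xs @ [2]" "length xs = 2*n+3" using Wd_split[of n a] by blast
  then show ?thesis using nth_append_length[of xs 2] by simp
qed

lemma Wd_not2: "k < 2*n+3 \<Longrightarrow> Wd n a ! k \<noteq> 2"
proof -
  assume k: "k < 2*n+3"
  obtain xs where xs: "Wd n a = xs @ [2]" "2 \<notin> set xs" "length xs = 2*n+3"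
    using Wd_split[of n a] by blast
  then have "Wd n a ! k = xs ! k" using k by (simp add: nth_append)
  moreover have "xs ! k \<in> set xs" using k xs(3) by simp
  ultimately show ?thesis using xs(2) by metis
qed

lemma Wd0_nth_1: "Wd n 0 ! 1 = 0" and Wd0_nth_mid: "Wd n 0 ! (n+2) = 1"
  by (simp_all add: Wd_def nth_append)

lemma Ht_pos: "0 < Ht n a"
proof (induction n arbitrary: a)
  case 0 then show ?case by simp
next
  case (Suc n)
  have "Wd n a \<noteq> []" by (simp add: Wd_def)
  then obtain c cs where "Wd n a = c # cs" by (cases "Wd n a") auto
  then show ?case using Suc.IH[of c] by simp
qed

lemma Ht_2: "Ht n 2 = Ht n 0"
  by (cases n) (simp_all add: Wd_def)

lemma Ht_1: "Ht n 1 = Ht n 0 + 1"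
proof (induction n)
  case 0 then show ?case by simp
next
  case (Suc n)
  have ih: "Ht n (Suc 0) = Ht n 0 + 1" using Suc.IH by simp
  have "Ht (Suc n) 1 = (n+1) * Ht n 0 + (n+2) * Ht n (Suc 0) + Ht n 2"
    by (simp add: Wd_def sum_list_replicate)
  moreover have "Ht (Suc n) 0 = (n+2) * Ht n 0 + (n+1) * Ht n (Suc 0) + Ht n 2"
    by (simp add: Wd_def sum_list_replicate)
  ultimately show ?case using ih by (simp add: algebra_simps)
qed

lemma Ht_Suc0: "Ht (Suc n) 0 = (n+2) * Ht n 0 + (n+1) * (Ht n 0 + 1) + Ht n 0"
proof -
  have ih: "Ht n (Suc 0) = Ht n 0 + 1" using Ht_1[of n] by simp
  show ?thesis by (simp add: Wd_def Ht_2 ih sum_list_replicate)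
qed

lemma Ht_ge0: "a < 3 \<Longrightarrow> Ht n 0 \<le> Ht n a"
  using Ht_1 Ht_2 by (cases "a = 0 \<or> a = 1 \<or> a = 2") auto

lemma Ht_le1: "a < 3 \<Longrightarrow> Ht n a \<le> Ht n 0 + 1"
  using Ht_1 Ht_2 by (cases "a = 0 \<or> a = 1 \<or> a = 2") auto

lemma Ht_mono_Suc: "2 * Ht n 0 \<le> Ht (Suc n) 0"
  using Ht_Suc0[of n] by simp

lemma Ht_mono: "m \<le> n \<Longrightarrow> Ht m 0 \<le> Ht n 0"
proof (induction n)
  case 0 then show ?case by simp
next
  case (Suc n)
  have "Ht n 0 \<le> Ht (Suc n) 0" using Ht_mono_Suc[of n] by simp
  then show ?case using Suc by (cases "m = Suc n") auto
qed

lemma Ht_ge_n: "n \<le> Ht n 0"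
proof (induction n)
  case 0 then show ?case by simp
next
  case (Suc n)
  then show ?case using Ht_Suc0[of n] Ht_pos[of n 0] by simp
qed

definition parent :: "nat \<Rightarrow> nat \<times> nat \<Rightarrow> nat \<times> nat" where
  "parent n p = loc (Ht n) (Wd n (fst p)) (snd p)"

definition valid :: "nat \<Rightarrow> nat \<times> nat \<Rightarrow> bool" where
  "valid n p \<longleftrightarrow> fst p < 3 \<and> snd p < Ht n (fst p)"

definition istop :: "nat \<Rightarrow> nat \<times> nat \<Rightarrow> bool" where
  "istop n p \<longleftrightarrow> Suc (snd p) = Ht n (fst p)"

definition nxt :: "nat \<times> nat \<Rightarrow> nat \<times> nat" where
  "nxt p = (fst p, Suc (snd p))"

abbreviation PS where "PS n a k \<equiv> psum (Ht n) (Wd n a) k"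

lemma Ht_Suc_sum: "Ht (Suc n) a = sum_list (map (Ht n) (Wd n a))"
  by simp
declare Ht.simps(2)[simp del]

lemma parent_dec:
  assumes "j < Ht (Suc n) a"
  shows "\<exists>k i. k < 2*n+4 \<and> i < Ht n (Wd n a ! k) \<and> j = PS n a k + i
            \<and> parent n (a, j) = (Wd n a ! k, i)"
proof -
  obtain k i where "k < length (Wd n a)" "i < Ht n (Wd n a ! k)" "j = PS n a k + i"
    using loc_dec[of j "Ht n" "Wd n a"] assms Ht_Suc_sum by auto
  then show ?thesis using loc_pos[of k "Wd n a" i "Ht n"] by (auto simp: parent_def Wd_len)
qed

lemma parent_pos:
  assumes "k < 2*n+4" "i < Ht n (Wd n a ! k)"
  shows "parent n (a, PS n a k + i) = (Wd n a ! k, i)"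
  using loc_pos[of k "Wd n a" i "Ht n"] assms by (simp add: parent_def Wd_len)

lemma PS_le: "k < 2*n+4 \<Longrightarrow> PS n a k + Ht n (Wd n a ! k) \<le> Ht (Suc n) a"
  using psum_le[of k "Wd n a" "Ht n"] by (simp add: Wd_len Ht_Suc_sum)

lemma PS_Suc: "k < 2*n+4 \<Longrightarrow> PS n a (Suc k) = PS n a k + Ht n (Wd n a ! k)"
  using psum_Suc[of k "Wd n a" "Ht n"] by (simp add: Wd_len)

lemma PS_full: "k = 2*n+4 \<Longrightarrow> PS n a k = Ht (Suc n) a"
  unfolding psum_def Ht_Suc_sum by (metis Wd_len take_all order_refl)

lemma parent_valid:
  assumes "valid (Suc n) p" shows "valid n (parent n p)"
proof -
  obtain a j where p: "p = (a, j)" by (cases p)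
  obtain k i where "k < 2*n+4" "i < Ht n (Wd n a ! k)" "parent n (a, j) = (Wd n a ! k, i)"
    using parent_dec[of j n a] assms p by (auto simp: valid_def)
  then show ?thesis using p Wd_nth_lt3[of k n a] by (simp add: valid_def Wd_len)
qed

lemma parent_first:
  assumes "j < Ht n 0" shows "parent n (a, j) = (0, j)"
  using parent_pos[of 0 n j a] assms by (simp add: Wd_0 psum_def)

lemma parent_base: "parent n (a, 0) = (0, 0)"
  using parent_first[of 0 n a] Ht_pos[of n 0] by simp

lemma parent_nxt:
  assumes "valid (Suc n) p" "\<not> istop n (parent n p)"
  shows "parent n (nxt p) = nxt (parent n p)"
proof -
  obtain a j where p: "p = (a, j)" by (cases p)
  obtain k i where k: "k < 2*n+4" "i < Ht n (Wd n a ! k)" "j = PS n a k + i"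
     "parent n (a, j) = (Wd n a ! k, i)"
    using parent_dec[of j n a] assms p by (auto simp: valid_def)
  then have "Suc i < Ht n (Wd n a ! k)" using assms p by (auto simp: istop_def)
  then have "parent n (a, PS n a k + Suc i) = (Wd n a ! k, Suc i)"
    using parent_pos[OF k(1)] by blast
  then show ?thesis using k p by (simp add: nxt_def)
qed

lemma parent_top_nxt:
  assumes "valid (Suc n) p" "istop n (parent n p)" "\<not> istop (Suc n) p"
  shows "snd (parent n (nxt p)) = 0"
proof -
  obtain a j where p: "p = (a, j)" by (cases p)
  obtain k i where k: "k < 2*n+4" "i < Ht n (Wd n a ! k)" "j = PS n a k + i"
     "parent n (a, j) = (Wd n a ! k, i)"
    using parent_dec[of j n a] assms p by (auto simp: valid_def)
  then have i: "Suc i = Ht n (Wd n a ! k)" using assms p by (auto simp: istop_def)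
  have j1: "Suc j < Ht (Suc n) a" using assms p by (auto simp: istop_def valid_def)
  have "Suc k < 2*n+4"
  proof (rule ccontr)
    assume "\<not> Suc k < 2*n+4"
    then have "Suc k = 2*n+4" using k by simp
    then have "PS n a (Suc k) = Ht (Suc n) a" using PS_full[of "Suc k" n a] by simp
    then show False using PS_Suc[OF k(1)] k(3) i j1 by simp
  qed
  then have "parent n (a, PS n a (Suc k) + 0) = (Wd n a ! Suc k, 0)"
    using parent_pos[of "Suc k" n 0 a, OF _ Ht_pos] by blast
  moreover have "nxt p = (a, PS n a (Suc k) + 0)"
    using PS_Suc[OF k(1)] k(3) i p by (simp add: nxt_def)
  ultimately show ?thesis by simp
qed

lemma parent_top:
  assumes "valid (Suc n) p" "istop (Suc n) p"
  shows "parent n p = (2, Ht n 2 - 1)"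
proof -
  obtain a j where p: "p = (a, j)" by (cases p)
  obtain k i where k: "k < 2*n+4" "i < Ht n (Wd n a ! k)" "j = PS n a k + i"
     "parent n (a, j) = (Wd n a ! k, i)"
    using parent_dec[of j n a] assms p by (auto simp: valid_def)
  have j1: "Suc j = Ht (Suc n) a" using assms p by (auto simp: istop_def)
  have kk: "k = 2*n+3"
  proof (rule ccontr)
    assume "k \<noteq> 2*n+3"
    then have "Suc k < 2*n+4" using k by simp
    then have "PS n a (Suc k) + Ht n (Wd n a ! Suc k) \<le> Ht (Suc n) a" using PS_le by blast
    then show False using PS_Suc[OF k(1)] k(2,3) j1 Ht_pos[of n "Wd n a ! Suc k"] by simp
  qed
  have "PS n a (Suc k) = Ht (Suc n) a" using kk PS_full[of "Suc k" n a] by simp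
  then have "Suc i = Ht n (Wd n a ! k)" using PS_Suc[OF k(1)] k(3) j1 by simp
  then show ?thesis using k kk p Wd_last by simp
qed

lemma parent_is_top2:
  assumes "valid (Suc n) p" "parent n p = (2, Ht n 2 - 1)"
  shows "istop (Suc n) p"
proof -
  obtain a j where p: "p = (a, j)" by (cases p)
  obtain k i where k: "k < 2*n+4" "i < Ht n (Wd n a ! k)" "j = PS n a k + i"
     "parent n (a, j) = (Wd n a ! k, i)"
    using parent_dec[of j n a] assms p by (auto simp: valid_def)
  have "Wd n a ! k = 2" using k assms p by simp
  then have kk: "k = 2*n+3" using Wd_not2[of k n a] k(1) by (cases "k < 2*n+3") auto
  have i: "i = Ht n 2 - 1" using k assms p by simp
  have e1: "PS n a (Suc k) = PS n a k + Ht n (Wd n a ! k)" using PS_Suc[OF k(1)] .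
  have e2: "Ht n (Wd n a ! k) = Ht n 2" using \<open>Wd n a ! k = 2\<close> by simp
  have "Suc j = PS n a (Suc k)" using e1 e2 k(3) i Ht_pos[of n 2] by simp
  moreover have "PS n a (Suc k) = Ht (Suc n) a" using PS_full[of "Suc k" n a] kk by simp
  ultimately show ?thesis using p by (simp add: istop_def)
qed

lemma child_exists:
  assumes "valid n (t, i)"
  shows "\<exists>p. 1 \<le> p \<and> p < Ht (Suc n) 0 \<and> parent n (0, p) = (t, i) \<and> parent n (2, p) = (t, i)"
proof -
  define k where "k = (if t = 0 then 1 else if t = 1 then n+2 else 2*n+3)"
  have kl: "k < 2*n+4" "1 \<le> k" by (auto simp: k_def)
  have W20: "Wd n 2 = Wd n 0" by (simp add: Wd_def)
  have t3: "t = 0 \<or> t = 1 \<or> t = 2" using assms by (auto simp: valid_def)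
  have wk0: "Wd n 0 ! k = t"
  proof -
    { assume "t = 0" then have ?thesis using Wd0_nth_1[of n] by (simp add: k_def) }
    moreover { assume "t = 1" then have ?thesis using Wd0_nth_mid[of n] by (simp add: k_def) }
    moreover { assume "t = 2" then have ?thesis using Wd_last[of n 0] by (simp add: k_def) }
    ultimately show ?thesis using t3 by blast
  qed
  have wk: "Wd n 0 ! k = t" "Wd n 2 ! k = t" using wk0 W20 by simp_all
  have i: "i < Ht n t" using assms by (simp add: valid_def)
  have "PS n 0 1 \<le> PS n 0 k" using psum_mono kl by blast
  moreover have "PS n 0 1 = Ht n 0" by (simp add: psum_def Wd_def)
  ultimately have p1: "1 \<le> PS n 0 k + i" using Ht_pos[of n 0] by simp
  have "PS n 0 k + i < Ht (Suc n) 0" using PS_le[OF kl(1), of 0, unfolded wk(1)] i by linarith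
  moreover have "parent n (0, PS n 0 k + i) = (t, i)"
    using parent_pos[OF kl(1), of i 0, unfolded wk(1)] i by blast
  moreover have "parent n (2, PS n 0 k + i) = (t, i)"
    using parent_pos[OF kl(1), of i 2, unfolded W20 wk(1)] i by blast
  ultimately show ?thesis using p1 by blast
qed


definition Qn :: "nat \<Rightarrow> nat" where "Qn n = 3 * (Ht n 0 + 2)"
definition code :: "nat \<Rightarrow> nat \<times> nat \<Rightarrow> nat" where
  "code n p = fst p * (Ht n 0 + 2) + snd p"
fun Rk :: "nat \<Rightarrow> nat" where
  "Rk 0 = 0"
| "Rk (Suc n) = Rk n + Ht n 0 + Ht n 1 + Ht n 2"
definition off :: "nat \<Rightarrow> nat \<Rightarrow> nat" where
  "off n a = (if a = 2 then 0 else if a = 0 then Ht n 2 else Ht n 2 + Ht n 0)"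
definition rank :: "nat \<Rightarrow> nat \<times> nat \<Rightarrow> nat" where
  "rank n p = Rk n + off n (fst p) + snd p"
fun th :: "nat \<Rightarrow> real" where
  "th 0 = 1"
| "th (Suc r) = th r / (2 * (real r + 2) * real (Qn (Suc r)))"
definition Ln :: "nat \<Rightarrow> nat \<times> nat \<Rightarrow> real" where "Ln n p = th (rank n p)"
fun lft :: "nat \<Rightarrow> nat \<times> nat \<Rightarrow> real" where
  "lft 0 p = 2 * real (code 0 p)"
| "lft (Suc n) p = lft n (parent n p) + Ln n (parent n p) * real (code (Suc n) p) / real (Qn (Suc n))"
definition Iv :: "nat \<Rightarrow> nat \<times> nat \<Rightarrow> real set" where
  "Iv n p = {lft n p .. lft n p + Ln n p}"

declare th.simps(2)[simp del]

lemma Qn_ge: "6 \<le> Qn n" using Ht_pos[of n 0] by (simp add: Qn_def)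

lemma Qn_mono: "m \<le> n \<Longrightarrow> Qn m \<le> Qn n"
  using Ht_mono by (simp add: Qn_def)

lemma code_lt: "valid n p \<Longrightarrow> code n p < Qn n"
proof -
  assume v: "valid n p"
  then have a: "fst p \<le> 2" "snd p < Ht n 0 + 2" using Ht_le1[of "fst p" n] by (auto simp: valid_def)
  have h: "x \<le> 2*M \<Longrightarrow> y < M \<Longrightarrow> x + y < 3*(M::nat)" for x y M by linarith
  have "fst p * (Ht n 0 + 2) \<le> 2 * (Ht n 0 + 2)" using a(1) by (rule mult_le_mono1)
  then show ?thesis using h a(2) unfolding code_def Qn_def by blast
qed

lemma code_inj:
  assumes "valid n p" "valid n q" "code n p = code n q" shows "p = q"
proof -
  have a: "snd p < Ht n 0 + 2" "snd q < Ht n 0 + 2"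
    using assms Ht_le1[of "fst p" n] Ht_le1[of "fst q" n] by (auto simp: valid_def)
  define M where "M = Ht n 0 + 2"
  have lt: "fst x < fst y \<Longrightarrow> snd x < M \<Longrightarrow> fst x * M + snd x < fst y * M + snd y" for x y :: "nat \<times> nat"
  proof -
    assume "fst x < fst y" "snd x < M"
    then have "Suc (fst x) * M \<le> fst y * M" by (intro mult_le_mono1) simp
    then show ?thesis using \<open>snd x < M\<close> by simp
  qed
  have "fst p = fst q"
  proof (rule ccontr)
    assume "fst p \<noteq> fst q"
    then have "fst p < fst q \<or> fst q < fst p" by linarith
    then show False using lt[of p q] lt[of q p] a assms(3) by (auto simp: code_def M_def)
  qed
  then show ?thesis using assms(3) by (simp add: code_def prod_eq_iff)
qed

lemma Rk_ge: "n \<le> Rk n"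
proof (induction n)
  case 0 then show ?case by simp
next
  case (Suc n) then show ?case using Ht_pos[of n 0] by simp
qed

lemma Rk_mono: "m \<le> n \<Longrightarrow> Rk m \<le> Rk n"
proof (induction n)
  case 0 then show ?case by simp
next
  case (Suc n) then show ?case by (cases "m = Suc n") auto
qed

lemma rank_bounds:
  assumes "valid n p" shows "Rk n \<le> rank n p" "rank n p < Rk (Suc n)"
proof -
  show "Rk n \<le> rank n p" by (simp add: rank_def)
  have "fst p = 0 \<or> fst p = 1 \<or> fst p = 2" using assms by (auto simp: valid_def)
  then show "rank n p < Rk (Suc n)" using assms by (auto simp: rank_def off_def valid_def)
qed

lemma rank_ge: "valid n p \<Longrightarrow> n \<le> rank n p"
  using rank_bounds(1) Rk_ge le_trans by blast

lemma th_pos: "0 < th r"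
proof (induction r)
  case 0 then show ?case by simp
next
  case (Suc r) then show ?case using Qn_ge[of "Suc r"] by (simp add: th.simps(2))
qed

lemma Qn_real_ge: "1 \<le> real (Qn n)" using Qn_ge[of n] by simp

lemma th_Suc: "th (Suc r) = th r / (2 * (real r + 2) * real (Qn (Suc r)))" by (simp add: th.simps(2))

lemma th_Suc_le: "th (Suc r) \<le> th r / 2"
proof -
  define D where "D = 2 * (real r + 2) * real (Qn (Suc r))"
  have a: "1 * 1 \<le> (real r + 2) * real (Qn (Suc r))"
    by (rule mult_mono) (use Qn_real_ge[of "Suc r"] in auto)
  then have "2 * 1 \<le> 2 * ((real r + 2) * real (Qn (Suc r)))" by (intro mult_left_mono) auto
  then have D2: "2 \<le> D" by (simp only: D_def mult.assoc mult_1_right)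
  have "th r / D \<le> th r / 2"
    by (rule divide_left_mono) (use D2 th_pos[of r] in auto)
  then show ?thesis by (simp add: th_Suc D_def)
qed

lemma th_le1: "th r \<le> 1"
proof (induction r)
  case 0 then show ?case by simp
next
  case (Suc r) then show ?case using th_Suc_le[of r] th_pos[of r] by linarith
qed

lemma th_half: "th r \<le> (1/2) ^ r"
proof (induction r)
  case 0 then show ?case by simp
next
  case (Suc r)
  have "th (Suc r) \<le> th r / 2" by (rule th_Suc_le)
  also have "\<dots> \<le> (1/2)^r / 2" using Suc.IH by simp
  finally show ?case by simp
qed

lemma th_antimono: "r \<le> s \<Longrightarrow> th s \<le> th r"
proof (induction s)
  case 0 then show ?case by simp
next
  case (Suc s)
  show ?case
  proof (cases "r = Suc s")
    case True then show ?thesis by simp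
  next
    case False then have "r \<le> s" using Suc.prems by simp
    then show ?thesis using Suc.IH th_Suc_le[of s] th_pos[of s] by linarith
  qed
qed

lemma th_step:
  assumes "n \<le> r" "r < s"
  shows "th s \<le> th r / (2 * (real n + 2) * real (Qn (Suc n)))"
proof -
  have "th s \<le> th (Suc r)" using th_antimono assms(2) by simp
  also have "\<dots> = th r / (2 * (real r + 2) * real (Qn (Suc r)))" by (rule th_Suc)
  also have "\<dots> \<le> th r / (2 * (real n + 2) * real (Qn (Suc n)))"
  proof (rule divide_left_mono)
    have "real (Qn (Suc n)) \<le> real (Qn (Suc r))" using Qn_mono[of "Suc n" "Suc r"] assms by simp
    moreover have "real n + 2 \<le> real r + 2" using assms by simp
    ultimately show "2 * (real n + 2) * real (Qn (Suc n)) \<le> 2 * (real r + 2) * real (Qn (Suc r))"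
      by (simp add: mult_mono)
    show "0 \<le> th r" using th_pos[of r] by simp
    show "0 < 2 * (real r + 2) * real (Qn (Suc r)) * (2 * (real n + 2) * real (Qn (Suc n)))"
      using Qn_real_ge[of "Suc r"] Qn_real_ge[of "Suc n"] by simp
  qed
  finally show ?thesis .
qed

lemma Ln_pos: "0 < Ln n p" by (simp add: Ln_def th_pos)

lemma Ln_le: "valid n p \<Longrightarrow> Ln n p \<le> (1/2) ^ n"
proof -
  assume "valid n p"
  then have "n \<le> rank n p" by (rule rank_ge)
  then have "th (rank n p) \<le> th n" by (rule th_antimono)
  also have "\<dots> \<le> (1/2) ^ n" by (rule th_half)
  finally show ?thesis by (simp add: Ln_def)
qed

lemma Ln_child:
  assumes "valid (Suc n) p"
  shows "Ln (Suc n) p \<le> Ln n (parent n p) / (2 * (real n + 2) * real (Qn (Suc n)))"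
proof -
  have v: "valid n (parent n p)" using parent_valid assms by blast
  have "rank n (parent n p) < Rk (Suc n)" using rank_bounds(2)[OF v] .
  also have "\<dots> \<le> rank (Suc n) p" using rank_bounds(1)[OF assms] .
  finally show ?thesis using th_step[OF rank_ge[OF v]] by (simp add: Ln_def)
qed

lemma Ln_child2:
  assumes "valid (Suc n) p"
  shows "Ln (Suc n) p \<le> Ln n (parent n p) / (2 * real (Qn (Suc n)))"
proof -
  have "Ln (Suc n) p \<le> Ln n (parent n p) / (2 * (real n + 2) * real (Qn (Suc n)))"
    by (rule Ln_child[OF assms])
  also have "\<dots> \<le> Ln n (parent n p) / (2 * real (Qn (Suc n)))"
  proof (rule divide_left_mono)
    show "0 \<le> Ln n (parent n p)" using Ln_pos less_imp_le by blast
    show "2 * real (Qn (Suc n)) \<le> 2 * (real n + 2) * real (Qn (Suc n))"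
      using Qn_real_ge[of "Suc n"] by simp
    show "0 < 2 * (real n + 2) * real (Qn (Suc n)) * (2 * real (Qn (Suc n)))"
      using Qn_real_ge[of "Suc n"] by simp
  qed
  finally show ?thesis .
qed

lemma Iv_nest:
  assumes "valid (Suc n) p"
  shows "Iv (Suc n) p \<subseteq> Iv n (parent n p)"
proof -
  define P where "P = parent n p"
  define Q where "Q = real (Qn (Suc n))"
  define c where "c = real (code (Suc n) p)"
  have Q1: "1 \<le> Q" using Qn_real_ge by (simp add: Q_def)
  have cQ: "c + 1 \<le> Q" using code_lt[OF assms] by (simp add: c_def Q_def)
  have LP: "0 < Ln n P" by (rule Ln_pos)
  have Lc: "Ln (Suc n) p \<le> Ln n P / (2 * Q)" using Ln_child2[OF assms] by (simp add: P_def Q_def)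
  have l: "lft (Suc n) p = lft n P + Ln n P * c / Q" by (simp add: P_def Q_def c_def)
  have c0: "0 \<le> c" by (simp add: c_def)
  have "Ln n P * c / Q \<ge> 0" using LP c0 Q1 by simp
  moreover have "Ln n P * c / Q + Ln n P / (2 * Q) \<le> Ln n P"
  proof -
    have "Ln n P * c / Q + Ln n P / (2 * Q) = Ln n P * (c + 1/2) / Q"
      using Q1 by (simp add: field_simps)
    also have "\<dots> \<le> Ln n P * Q / Q"
      using LP Q1 cQ by (intro divide_right_mono mult_left_mono) auto
    also have "\<dots> = Ln n P" using Q1 by simp
    finally show ?thesis .
  qed
  ultimately show ?thesis using l Lc unfolding Iv_def P_def[symmetric] by auto
qed

lemma sib_sep:
  assumes "valid (Suc n) p" "valid (Suc n) q" "p \<noteq> q" "parent n p = parent n q"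
    "u \<in> Iv (Suc n) p" "v \<in> Iv (Suc n) q"
  shows "Ln n (parent n p) / (2 * real (Qn (Suc n))) \<le> \<bar>u - v\<bar>"
proof -
  define P where "P = parent n p"
  define Q where "Q = real (Qn (Suc n))"
  have Q1: "1 \<le> Q" using Qn_real_ge by (simp add: Q_def)
  have LP: "0 < Ln n P" by (rule Ln_pos)
  have cd: "code (Suc n) p \<noteq> code (Suc n) q" using code_inj assms(1-3) by blast
  have Lp: "Ln (Suc n) p \<le> Ln n P / (2 * Q)" using Ln_child2[OF assms(1)] by (simp add: P_def Q_def)
  have Lq: "Ln (Suc n) q \<le> Ln n P / (2 * Q)" using Ln_child2[OF assms(2)] assms(4) by (simp add: P_def Q_def)
  have lp: "lft (Suc n) p = lft n P + Ln n P * real (code (Suc n) p) / Q" by (simp add: P_def Q_def)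
  have lq: "lft (Suc n) q = lft n P + Ln n P * real (code (Suc n) q) / Q" using assms(4) by (simp add: P_def Q_def)
  have key: "\<And>x y. x \<noteq> y \<Longrightarrow> Ln n P / Q \<le> \<bar>Ln n P * real x / Q - Ln n P * real y / Q\<bar>"
  proof -
    fix x y :: nat assume "x \<noteq> y"
    then have "1 \<le> \<bar>real x - real y\<bar>" by linarith
    then have "Ln n P * 1 \<le> Ln n P * \<bar>real x - real y\<bar>" using LP by (intro mult_left_mono) auto
    moreover have "\<bar>Ln n P * real x / Q - Ln n P * real y / Q\<bar> = Ln n P * \<bar>real x - real y\<bar> / Q"
    proof -
      have "Ln n P * real x / Q - Ln n P * real y / Q = Ln n P * (real x - real y) / Q"
        by (simp add: diff_divide_distrib right_diff_distrib)
      then show ?thesis using LP Q1 by (simp add: abs_mult)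
    qed
    ultimately show "Ln n P / Q \<le> \<bar>Ln n P * real x / Q - Ln n P * real y / Q\<bar>"
      using Q1 by (simp add: divide_right_mono)
  qed
  have k: "Ln n P / Q \<le> \<bar>lft (Suc n) p - lft (Suc n) q\<bar>" using key[OF cd] lp lq by simp
  have u: "lft (Suc n) p \<le> u" "u \<le> lft (Suc n) p + Ln n P / (2 * Q)" using assms(5) Lp by (auto simp: Iv_def)
  have v: "lft (Suc n) q \<le> v" "v \<le> lft (Suc n) q + Ln n P / (2 * Q)" using assms(6) Lq by (auto simp: Iv_def)
  have h: "Ln n P / Q = Ln n P / (2 * Q) + Ln n P / (2 * Q)" by (simp add: field_simps)
  have "Ln n P / (2 * Q) \<le> \<bar>u - v\<bar>" using k u v h by linarith
  then show ?thesis by (simp add: P_def Q_def)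
qed

fun sepb :: "nat \<Rightarrow> real" where
  "sepb 0 = 1"
| "sepb (Suc k) = th (Rk (Suc k)) / (2 * real (Qn (Suc k)))"

lemma sepb_pos: "0 < sepb m"
proof (cases m)
  case 0 then show ?thesis by simp
next
  case (Suc k)
  have "0 < th (Rk (Suc k))" by (rule th_pos)
  moreover have "0 < 2 * real (Qn (Suc k))" using Qn_real_ge[of "Suc k"] by simp
  ultimately show ?thesis using Suc by simp
qed

lemma sepb_Suc_le: "sepb (Suc k) \<le> sepb k"
proof (cases k)
  case 0
  have "th (Rk 1) \<le> 1" by (rule th_le1)
  moreover have "1 \<le> 2 * real (Qn 1)" using Qn_real_ge[of 1] by simp
  ultimately have "th (Rk 1) / (2 * real (Qn 1)) \<le> 1"
    by (simp add: divide_le_eq)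
  then show ?thesis using 0 by simp
next
  case (Suc j)
  have A: "th (Rk (Suc (Suc j))) \<le> th (Rk (Suc j))" by (rule th_antimono, rule Rk_mono) simp
  have B: "2 * real (Qn (Suc j)) \<le> 2 * real (Qn (Suc (Suc j)))" using Qn_mono[of "Suc j" "Suc (Suc j)"] by simp
  have C: "0 < 2 * real (Qn (Suc j))" using Qn_real_ge[of "Suc j"] by simp
  have "th (Rk (Suc (Suc j))) / (2 * real (Qn (Suc (Suc j)))) \<le> th (Rk (Suc j)) / (2 * real (Qn (Suc j)))"
    by (rule frac_le[OF less_imp_le[OF th_pos] A C B])
  then show ?thesis using Suc by (simp only: sepb.simps)
qed

lemma sepb_antimono: "m \<le> n \<Longrightarrow> sepb n \<le> sepb m"
proof (induction n)
  case 0 then show ?case by simp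
next
  case (Suc n) then show ?case using sepb_Suc_le[of n] by (cases "m = Suc n") auto
qed

lemma lft0_sep:
  assumes "valid 0 p" "valid 0 q" "p \<noteq> q" "u \<in> Iv 0 p" "v \<in> Iv 0 q"
  shows "1 \<le> \<bar>u - v\<bar>"
proof -
  have cd: "code 0 p \<noteq> code 0 q" using code_inj assms(1-3) by blast
  then have "2 \<le> \<bar>lft 0 p - lft 0 q\<bar>" by simp
  moreover have "Ln 0 p \<le> 1" "Ln 0 q \<le> 1" using Ln_le[OF assms(1)] Ln_le[OF assms(2)] by auto
  ultimately show ?thesis using assms(4,5) by (auto simp: Iv_def)
qed

lemma Iv_sep:
  assumes "valid n p" "valid n q" "p \<noteq> q" "u \<in> Iv n p" "v \<in> Iv n q"
  shows "sepb n \<le> \<bar>u - v\<bar>"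
  using assms
proof (induction n arbitrary: p q u v)
  case 0 then show ?case using lft0_sep by simp
next
  case (Suc n)
  show ?case
  proof (cases "parent n p = parent n q")
    case True
    have "sepb (Suc n) \<le> Ln n (parent n p) / (2 * real (Qn (Suc n)))"
    proof -
      have v: "valid n (parent n p)" using parent_valid Suc.prems(1) by blast
      have "rank n (parent n p) \<le> Rk (Suc n)" using rank_bounds(2)[OF v] by simp
      then have "th (Rk (Suc n)) \<le> Ln n (parent n p)" unfolding Ln_def by (rule th_antimono)
      then show ?thesis using Qn_real_ge[of "Suc n"] by (simp add: divide_right_mono)
    qed
    also have "\<dots> \<le> \<bar>u - v\<bar>" using sib_sep[OF Suc.prems(1,2,3) True Suc.prems(4,5)] .
    finally show ?thesis .
  next
    case False
    have "sepb n \<le> \<bar>u - v\<bar>"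
      using Suc.IH[OF parent_valid[OF Suc.prems(1)] parent_valid[OF Suc.prems(2)] False]
        Iv_nest[OF Suc.prems(1)] Iv_nest[OF Suc.prems(2)] Suc.prems(4,5) by blast
    then show ?thesis using sepb_Suc_le[of n] by linarith
  qed
qed

lemma Iv_disj: "valid n p \<Longrightarrow> valid n q \<Longrightarrow> p \<noteq> q \<Longrightarrow> Iv n p \<inter> Iv n q = {}"
proof -
  assume a: "valid n p" "valid n q" "p \<noteq> q"
  { fix x assume "x \<in> Iv n p" "x \<in> Iv n q"
    then have "sepb n \<le> \<bar>x - x\<bar>" using Iv_sep[OF a] by blast
    then have False using sepb_pos[of n] by simp }
  then show ?thesis by blast
qed


definition Kset :: "real set" where "Kset = {z. \<forall>n. \<exists>p. valid n p \<and> z \<in> Iv n p}"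
definition fl :: "nat \<Rightarrow> real \<Rightarrow> nat \<times> nat" where
  "fl n z = (THE p. valid n p \<and> z \<in> Iv n p)"

lemma fl_eq: assumes "valid n p" "z \<in> Iv n p" shows "fl n z = p"
  unfolding fl_def
proof (rule the_equality)
  show "valid n p \<and> z \<in> Iv n p" using assms by blast
  fix q assume "valid n q \<and> z \<in> Iv n q"
  then show "q = p" using Iv_disj[of n q p] assms by blast
qed

lemma fl: assumes "z \<in> Kset" shows "valid n (fl n z)" "z \<in> Iv n (fl n z)"
proof -
  obtain p where "valid n p" "z \<in> Iv n p" using assms unfolding Kset_def by blast
  then show "valid n (fl n z)" "z \<in> Iv n (fl n z)" using fl_eq by auto
qed

lemma fl_parent: assumes "z \<in> Kset" shows "parent n (fl (Suc n) z) = fl n z"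
proof -
  have "z \<in> Iv n (parent n (fl (Suc n) z))" using Iv_nest[OF fl(1)[OF assms]] fl(2)[OF assms] by blast
  then show ?thesis using fl_eq parent_valid[OF fl(1)[OF assms]] by metis
qed

lemma valid_finite: "finite {p. valid n p}"
proof -
  have "{p. valid n p} \<subseteq> {0..<3} \<times> {0..<Ht n 0 + 2}"
  proof
    fix p assume "p \<in> {p. valid n p}"
    then have "fst p < 3" "snd p < Ht n (fst p)" by (auto simp: valid_def)
    then show "p \<in> {0..<3} \<times> {0..<Ht n 0 + 2}" using Ht_le1[of "fst p" n] by (cases p) auto
  qed
  then show ?thesis by (rule finite_subset) simp
qed

lemma K_eq_INT: "Kset = (\<Inter>n. \<Union>p\<in>{p. valid n p}. Iv n p)"
  by (auto simp: Kset_def)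

lemma K_closed: "closed Kset"
  unfolding K_eq_INT
  by (intro closed_INT ballI closed_UN valid_finite) (simp add: Iv_def)

lemma K_bounded: "Kset \<subseteq> {0 .. 2 * real (Qn 0) + 1}"
proof
  fix z assume z: "z \<in> Kset"
  have v: "valid 0 (fl 0 z)" and zi: "z \<in> Iv 0 (fl 0 z)" using fl[OF z] by auto
  have "code 0 (fl 0 z) < Qn 0" using code_lt[OF v] .
  moreover have "Ln 0 (fl 0 z) \<le> 1" using Ln_le[OF v] by simp
  ultimately show "z \<in> {0 .. 2 * real (Qn 0) + 1}" using zi by (auto simp: Iv_def)
qed

lemma K_compact: "compact Kset"
  using K_closed K_bounded by (simp add: compact_eq_bounded_closed bounded_subset[OF bounded_closed_interval])

definition chain :: "(nat \<Rightarrow> nat \<times> nat) \<Rightarrow> bool" where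
  "chain c \<longleftrightarrow> (\<forall>n. valid n (c n) \<and> parent n (c (Suc n)) = c n)"

definition pt :: "(nat \<Rightarrow> nat \<times> nat) \<Rightarrow> real" where
  "pt c = (SUP n. lft n (c n))"

lemma chain_nest: assumes "chain c" "m \<le> n" shows "Iv n (c n) \<subseteq> Iv m (c m)"
  using assms(2)
proof (induction n)
  case 0 then show ?case by simp
next
  case (Suc n)
  show ?case
  proof (cases "m = Suc n")
    case True then show ?thesis by simp
  next
    case False
    then have "m \<le> n" using Suc.prems by simp
    moreover have "Iv (Suc n) (c (Suc n)) \<subseteq> Iv n (c n)"
      using Iv_nest[of n "c (Suc n)"] assms(1) unfolding chain_def by metis
    ultimately show ?thesis using Suc.IH by blast
  qed
qed

lemma lft_in: "lft n p \<in> Iv n p"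
  using Ln_pos[of n p] by (simp add: Iv_def)

lemma pt_in: assumes "chain c" shows "pt c \<in> Iv n (c n)"
proof -
  have bdd: "bdd_above (range (\<lambda>m. lft m (c m)))"
  proof (rule bdd_aboveI2)
    fix m
    have "lft m (c m) \<in> Iv 0 (c 0)" using chain_nest[OF assms, of 0 m] lft_in by blast
    then show "lft m (c m) \<le> lft 0 (c 0) + Ln 0 (c 0)" by (simp add: Iv_def)
  qed
  have "lft n (c n) \<le> pt c" unfolding pt_def by (rule cSUP_upper[OF _ bdd]) simp
  moreover have "pt c \<le> lft n (c n) + Ln n (c n)"
    unfolding pt_def
  proof (rule cSUP_least)
    fix m
    show "lft m (c m) \<le> lft n (c n) + Ln n (c n)"
    proof (cases "n \<le> m")
      case True
      then have "lft m (c m) \<in> Iv n (c n)" using chain_nest[OF assms True] lft_in by blast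
      then show ?thesis by (simp add: Iv_def)
    next
      case False
      then have "m \<le> n" by simp
      then have "lft n (c n) \<in> Iv m (c m)" using chain_nest[OF assms, of m n] lft_in[of n "c n"] by blast
      then show ?thesis using Ln_pos[of n "c n"] by (simp add: Iv_def)
    qed
  qed simp
  ultimately show ?thesis by (simp add: Iv_def)
qed

lemma pt_K: assumes "chain c" shows "pt c \<in> Kset" "fl n (pt c) = c n"
proof -
  show "pt c \<in> Kset" using pt_in[OF assms] assms unfolding Kset_def chain_def by blast
  show "fl n (pt c) = c n" using fl_eq pt_in[OF assms] assms by (auto simp: chain_def)
qed

lemma fl_chain: "z \<in> Kset \<Longrightarrow> chain (\<lambda>n. fl n z)"
  using fl fl_parent by (auto simp: chain_def)

lemma K_eq:
  assumes "z \<in> Kset" "w \<in> Kset" "\<And>n. fl n z = fl n w" shows "z = w"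
proof (rule ccontr)
  assume "z \<noteq> w"
  then have "0 < \<bar>z - w\<bar>" by simp
  then obtain n where n: "(1/2::real) ^ n < \<bar>z - w\<bar>" using real_arch_pow_inv[of "\<bar>z - w\<bar>" "1/2"] by auto
  have "z \<in> Iv n (fl n z)" "w \<in> Iv n (fl n z)" using fl assms by metis+
  then have "\<bar>z - w\<bar> \<le> Ln n (fl n z)" by (auto simp: Iv_def)
  also have "\<dots> \<le> (1/2) ^ n" using Ln_le fl(1)[OF assms(1)] by blast
  finally show False using n by simp
qed

lemma K_dist: assumes "z \<in> Kset" "w \<in> Kset" "fl n z = fl n w" shows "\<bar>z - w\<bar> \<le> Ln n (fl n z)"
  using fl[OF assms(1), of n] fl[OF assms(2), of n] assms(3) by (auto simp: Iv_def)

fun dn :: "nat \<Rightarrow> nat \<Rightarrow> nat \<times> nat \<Rightarrow> nat \<times> nat" where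
  "dn 0 n p = p"
| "dn (Suc k) n p = dn k n (parent (n + k) p)"

lemma dn_valid: "valid (n + k) p \<Longrightarrow> valid n (dn k n p)"
proof (induction k arbitrary: p)
  case 0 then show ?case by simp
next
  case (Suc k)
  then have "valid (n + k) (parent (n + k) p)" using parent_valid[of "n+k" p] by simp
  then show ?case using Suc.IH by simp
qed

lemma dn_Suc': "dn (Suc k) n p = parent n (dn k (Suc n) p)"
proof (induction k arbitrary: p)
  case 0 then show ?case by simp
next
  case (Suc k)
  have "dn (Suc (Suc k)) n p = dn (Suc k) n (parent (n + Suc k) p)" by simp
  also have "\<dots> = parent n (dn k (Suc n) (parent (n + Suc k) p))" by (rule Suc.IH)
  also have "\<dots> = parent n (dn (Suc k) (Suc n) p)" by simp
  finally show ?case .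
qed

lemma dn_fl: "z \<in> Kset \<Longrightarrow> dn k n (fl (n + k) z) = fl n z"
proof (induction k)
  case 0 then show ?case by simp
next
  case (Suc k)
  have "dn (Suc k) n (fl (n + Suc k) z) = dn k n (parent (n + k) (fl (Suc (n + k)) z))" by simp
  also have "\<dots> = dn k n (fl (n + k) z)" using fl_parent[OF Suc.prems] by simp
  finally show ?case using Suc by simp
qed

definition child :: "nat \<Rightarrow> nat \<times> nat \<Rightarrow> nat \<times> nat" where
  "child l q = (0, SOME x. 1 \<le> x \<and> x < Ht (Suc l) 0 \<and> parent l (0, x) = q \<and> parent l (2, x) = q)"

lemma child: assumes "valid l q"
  shows "valid (Suc l) (child l q)" "parent l (child l q) = q"
    "1 \<le> snd (child l q)" "parent l (2, snd (child l q)) = q"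
proof -
  obtain t i where q: "q = (t, i)" by (cases q)
  have "\<exists>x. 1 \<le> x \<and> x < Ht (Suc l) 0 \<and> parent l (0, x) = q \<and> parent l (2, x) = q"
    using child_exists assms q by blast
  from someI_ex[OF this] show "valid (Suc l) (child l q)" "parent l (child l q) = q"
    "1 \<le> snd (child l q)" "parent l (2, snd (child l q)) = q"
    by (auto simp: child_def valid_def)
qed

fun up :: "nat \<Rightarrow> nat \<times> nat \<Rightarrow> nat \<Rightarrow> nat \<times> nat" where
  "up n p 0 = p"
| "up n p (Suc k) = child (n + k) (up n p k)"

lemma up_valid: "valid n p \<Longrightarrow> valid (n + k) (up n p k)"
  by (induction k) (auto simp: child(1))

lemma piece_nonempty: assumes "valid n p" shows "\<exists>z\<in>Kset. fl n z = p"
proof -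
  define c where "c m = (if m \<le> n then dn (n - m) m p else up n p (m - n))" for m
  have "chain c"
    unfolding chain_def
  proof
    fix m
    show "valid m (c m) \<and> parent m (c (Suc m)) = c m"
    proof (cases "m < n")
      case True
      have v: "valid m (c m)" using dn_valid[of m "n - m" p] assms True by (simp add: c_def)
      have "c (Suc m) = dn (n - Suc m) (Suc m) p" using True by (simp add: c_def)
      then have "parent m (c (Suc m)) = dn (Suc (n - Suc m)) m p" using dn_Suc'[of "n - Suc m" m p] by simp
      also have "\<dots> = c m" using True by (simp add: c_def Suc_diff_Suc)
      finally show ?thesis using v by simp
    next
      case False
      show ?thesis
      proof (cases "m = n")
        case True
        then have "c m = p" "c (Suc m) = child n p" by (simp_all add: c_def)
        then show ?thesis using child[OF assms] assms True by simp
      next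
        case False
        then have mn: "n < m" using \<open>\<not> m < n\<close> by simp
        then have cm: "c m = up n p (m - n)" "c (Suc m) = child (n + (m - n)) (up n p (m - n))"
          by (simp_all add: c_def Suc_diff_le)
        have "valid m (c m)" using up_valid[OF assms, of "m - n"] mn cm by simp
        then show ?thesis using child(2)[of m "c m"] cm mn by simp
      qed
    qed
  qed
  then show ?thesis using pt_K[of c] by (intro bexI[of _ "pt c"]) (auto simp: c_def)
qed


definition Nz :: "real \<Rightarrow> nat" where "Nz z = (LEAST n. \<not> istop n (fl n z))"
definition zmin :: real where "zmin = pt (\<lambda>n. (0, 0))"
definition fch :: "real \<Rightarrow> nat \<Rightarrow> nat \<times> nat" where
  "fch z m = (if m < Nz z then dn (Nz z - m) m (nxt (fl (Nz z) z)) else nxt (fl m z))"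
definition F :: "real \<Rightarrow> real" where
  "F z = (if \<exists>n. \<not> istop n (fl n z) then pt (fch z) else zmin)"

lemma chain_zero: "chain (\<lambda>n. (0, 0))"
  using Ht_pos parent_base by (auto simp: chain_def valid_def)

lemma zmin: "zmin \<in> Kset" "fl n zmin = (0, 0)"
  using pt_K[OF chain_zero] by (auto simp: zmin_def)

lemma nontop_Suc:
  assumes "z \<in> Kset" "\<not> istop n (fl n z)" shows "\<not> istop (Suc n) (fl (Suc n) z)"
proof
  assume "istop (Suc n) (fl (Suc n) z)"
  then have "parent n (fl (Suc n) z) = (2, Ht n 2 - 1)" using parent_top fl(1)[OF assms(1)] by blast
  then have "fl n z = (2, Ht n 2 - 1)" using fl_parent[OF assms(1)] by simp
  then show False using assms(2) Ht_pos[of n 2] by (simp add: istop_def)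
qed

lemma nontop_up:
  assumes "z \<in> Kset" "\<not> istop n (fl n z)" "n \<le> m" shows "\<not> istop m (fl m z)"
  using assms(3)
proof (induction m)
  case 0 then show ?case using assms(2) by simp
next
  case (Suc m)
  show ?case
  proof (cases "n = Suc m")
    case True then show ?thesis using assms(2) by simp
  next
    case False then show ?thesis using Suc nontop_Suc[OF assms(1)] by simp
  qed
qed

lemma Nz:
  assumes "z \<in> Kset" "\<exists>n. \<not> istop n (fl n z)"
  shows "\<not> istop (Nz z) (fl (Nz z) z)" "m < Nz z \<Longrightarrow> istop m (fl m z)"
    "Nz z \<le> m \<Longrightarrow> \<not> istop m (fl m z)"
proof -
  show a: "\<not> istop (Nz z) (fl (Nz z) z)" unfolding Nz_def using assms(2) by (rule LeastI_ex)
  show "m < Nz z \<Longrightarrow> istop m (fl m z)" unfolding Nz_def using not_less_Least by blast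
  show "Nz z \<le> m \<Longrightarrow> \<not> istop m (fl m z)" using nontop_up[OF assms(1) a] by blast
qed

lemma nxt_valid: "valid n p \<Longrightarrow> \<not> istop n p \<Longrightarrow> valid n (nxt p)"
  by (auto simp: valid_def istop_def nxt_def)

lemma fch_chain:
  assumes z: "z \<in> Kset" and ex: "\<exists>n. \<not> istop n (fl n z)"
  shows "chain (fch z)"
  unfolding chain_def
proof
  fix m
  define N where "N = Nz z"
  define q where "q = nxt (fl N z)"
  have vq: "valid N q" using nxt_valid fl(1)[OF z] Nz(1)[OF z ex] by (simp add: q_def N_def)
  show "valid m (fch z m) \<and> parent m (fch z (Suc m)) = fch z m"
  proof (cases "m < N")
    case True
    have cm: "fch z m = dn (N - m) m q" using True by (simp add: fch_def N_def q_def)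
    have cs: "fch z (Suc m) = dn (N - Suc m) (Suc m) q"
      using True by (cases "Suc m = N") (simp_all add: fch_def N_def q_def)
    have "valid m (dn (N - m) m q)" using dn_valid[of m "N - m" q] vq True by simp
    moreover have "parent m (dn (N - Suc m) (Suc m) q) = dn (Suc (N - Suc m)) m q"
      using dn_Suc'[of "N - Suc m" m q] by simp
    moreover have "Suc (N - Suc m) = N - m" using True by simp
    ultimately show ?thesis using cm cs by simp
  next
    case False
    then have nt: "\<not> istop m (fl m z)" using Nz(3)[OF z ex] by (simp add: N_def)
    have cm: "fch z m = nxt (fl m z)" "fch z (Suc m) = nxt (fl (Suc m) z)"
      using False by (simp_all add: fch_def N_def)
    have "parent m (nxt (fl (Suc m) z)) = nxt (parent m (fl (Suc m) z))"
      using parent_nxt fl(1)[OF z] nt fl_parent[OF z] by metis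
    then show ?thesis using cm nt nxt_valid fl(1)[OF z] fl_parent[OF z] by simp
  qed
qed

lemma F_K: "z \<in> Kset \<Longrightarrow> F z \<in> Kset"
  using pt_K fch_chain zmin by (auto simp: F_def)

lemma F_nxt:
  assumes "z \<in> Kset" "\<not> istop n (fl n z)" shows "fl n (F z) = nxt (fl n z)"
proof -
  have ex: "\<exists>n. \<not> istop n (fl n z)" using assms(2) by blast
  have "\<not> n < Nz z" using Nz(2)[OF assms(1) ex] assms(2) by blast
  then have "fch z n = nxt (fl n z)" by (simp add: fch_def)
  then show ?thesis using pt_K(2)[OF fch_chain[OF assms(1) ex]] ex by (simp add: F_def)
qed

lemma dn_base: "snd (dn k n (a, 0)) = 0"
proof (induction k arbitrary: a)
  case 0 then show ?case by simp
next
  case (Suc k) then show ?case by (simp add: parent_base)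
qed

lemma F_top:
  assumes z: "z \<in> Kset" and t: "istop n (fl n z)" shows "snd (fl n (F z)) = 0"
proof (cases "\<exists>n. \<not> istop n (fl n z)")
  case False
  then show ?thesis using zmin by (simp add: F_def)
next
  case ex: True
  define N where "N = Nz z"
  have nN: "n < N"
  proof (rule ccontr)
    assume "\<not> n < N" then have "Nz z \<le> n" by (simp add: N_def)
    then show False using Nz(3)[OF z ex, of n] t by blast
  qed
  then obtain k where k: "N = Suc (n + k)" by (metis less_imp_Suc_add)
  have topk: "istop (n + k) (fl (n + k) z)" using Nz(2)[OF z ex, of "n+k"] k by (simp add: N_def)
  have ntN: "\<not> istop N (fl N z)" using Nz(1)[OF z ex] by (simp add: N_def)
  have "snd (parent (n + k) (nxt (fl (Suc (n + k)) z))) = 0"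
    using parent_top_nxt[of "n+k" "fl (Suc (n+k)) z"] fl(1)[OF z] fl_parent[OF z] topk ntN k by simp
  then obtain a where pa: "parent (n + k) (nxt (fl N z)) = (a, 0)" using k by (metis prod.collapse)
  have "fch z n = dn (Suc k) n (nxt (fl N z))" using nN k by (simp add: fch_def N_def)
  also have "\<dots> = dn k n (a, 0)" using pa by simp
  finally have "snd (fch z n) = 0" using dn_base by simp
  then show ?thesis using pt_K(2)[OF fch_chain[OF z ex]] ex by (simp add: F_def)
qed

lemma F_iter:
  assumes "z \<in> Kset" "fl n z = (a, j)" "j + m < Ht n a"
  shows "(F ^^ m) z \<in> Kset \<and> fl n ((F ^^ m) z) = (a, j + m)"
  using assms(3)
proof (induction m)
  case 0 then show ?case using assms by simp
next
  case (Suc m)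
  then have ih: "(F ^^ m) z \<in> Kset" "fl n ((F ^^ m) z) = (a, j + m)" by auto
  have "\<not> istop n (fl n ((F ^^ m) z))" using ih(2) Suc.prems by (simp add: istop_def)
  then have "fl n (F ((F ^^ m) z)) = nxt (a, j + m)" using F_nxt[OF ih(1)] ih(2) by simp
  then show ?case using F_K[OF ih(1)] by (simp add: nxt_def)
qed

lemma alltop:
  assumes "z \<in> Kset" "\<forall>n. istop n (fl n z)" shows "fl n z = (2, Ht n 2 - 1)"
proof -
  have "parent n (fl (Suc n) z) = (2, Ht n 2 - 1)"
    using parent_top fl(1)[OF assms(1)] assms(2) by blast
  then show ?thesis using fl_parent[OF assms(1)] by simp
qed

lemma fl_down: assumes "z \<in> Kset" "w \<in> Kset" "fl n z = fl n w" "m \<le> n" shows "fl m z = fl m w"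
proof -
  obtain k where "n = m + k" using assms(4) le_Suc_ex by blast
  then show ?thesis using dn_fl[OF assms(1), of k m] dn_fl[OF assms(2), of k m] assms(3) by simp
qed

lemma nontop_F_ne_zmin:
  assumes "z \<in> Kset" "\<exists>n. \<not> istop n (fl n z)" shows "F z \<noteq> zmin"
proof
  assume e: "F z = zmin"
  have "fl (Nz z) (F z) = nxt (fl (Nz z) z)" using F_nxt[OF assms(1) Nz(1)[OF assms]] .
  then show False using e zmin(2)[of "Nz z"] by (simp add: nxt_def)
qed

lemma F_alltop: "z \<in> Kset \<Longrightarrow> \<not> (\<exists>n. \<not> istop n (fl n z)) \<Longrightarrow> F z = zmin"
  by (simp add: F_def)

lemma F_inj: "inj_on F Kset"
proof (rule inj_onI)
  fix z w assume z: "z \<in> Kset" and w: "w \<in> Kset" and e: "F z = F w"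
  show "z = w"
  proof (cases "\<exists>n. \<not> istop n (fl n z)")
    case exz: True
    show ?thesis
    proof (cases "\<exists>n. \<not> istop n (fl n w)")
      case exw: True
      show ?thesis
      proof (rule K_eq[OF z w])
        fix m
        define n where "n = max m (max (Nz z) (Nz w))"
        have "fl n (F z) = nxt (fl n z)" using F_nxt[OF z Nz(3)[OF z exz]] by (simp add: n_def)
        moreover have "fl n (F w) = nxt (fl n w)" using F_nxt[OF w Nz(3)[OF w exw]] by (simp add: n_def)
        ultimately have "nxt (fl n z) = nxt (fl n w)" using e by simp
        then have "fl n z = fl n w" by (simp add: nxt_def prod_eq_iff)
        then show "fl m z = fl m w" using fl_down[OF z w] by (simp add: n_def)
      qed
    next
      case False
      then show ?thesis using e F_alltop[OF w] nontop_F_ne_zmin[OF z exz] by simp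
    qed
  next
    case nz: False
    show ?thesis
    proof (cases "\<exists>n. \<not> istop n (fl n w)")
      case exw: True
      then show ?thesis using e F_alltop[OF z nz] nontop_F_ne_zmin[OF w exw] by simp
    next
      case False
      then show ?thesis using alltop[OF z] alltop[OF w] nz K_eq[OF z w] by auto
    qed
  qed
qed

lemma F_hits:
  assumes "valid n p" shows "\<exists>z\<in>Kset. fl n (F z) = p"
proof -
  have c: "valid (Suc n) (child n p)" "parent n (child n p) = p" "1 \<le> snd (child n p)"
    using child[OF assms] by auto
  define x where "x = snd (child n p)"
  have cx: "child n p = (0, x)" by (simp add: child_def x_def)
  have vx: "valid (Suc n) (0, x - 1)" using c cx by (auto simp: valid_def)
  obtain z where z: "z \<in> Kset" "fl (Suc n) z = (0, x - 1)" using piece_nonempty[OF vx] by blast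
  have "\<not> istop (Suc n) (fl (Suc n) z)" using z c cx by (auto simp: istop_def valid_def)
  then have "fl (Suc n) (F z) = (0, x)" using F_nxt[OF z(1)] z(2) c(3) cx by (simp add: nxt_def)
  then have "fl n (F z) = p" using fl_parent[OF F_K[OF z(1)], of n] c cx by simp
  then show ?thesis using z by blast
qed


definition N0 :: "real \<Rightarrow> nat" where
  "N0 z = (if \<exists>n. \<not> istop n (fl n z) then Nz z else 0)"

lemma rank_nxt: "rank n (nxt p) = Suc (rank n p)"
  by (simp add: rank_def nxt_def)

lemma key_bound:
  assumes z: "z \<in> Kset" and y: "y \<in> Kset" and n: "N0 z \<le> n"
    and e: "fl n y = fl n z" and d: "fl (Suc n) y \<noteq> fl (Suc n) z"
  shows "\<bar>F y - F z\<bar> \<le> \<bar>y - z\<bar> / (real n + 2)"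
proof -
  define P where "P = fl n z"
  have vP: "valid n P" using fl(1)[OF z] by (simp add: P_def)
  define g where "g = Ln n P / (2 * real (Qn (Suc n)))"
  have g: "g \<le> \<bar>y - z\<bar>"
  proof -
    have "parent n (fl (Suc n) y) = parent n (fl (Suc n) z)"
      using fl_parent[OF y] fl_parent[OF z] e by simp
    moreover have "parent n (fl (Suc n) y) = P" using fl_parent[OF y] e by (simp add: P_def)
    ultimately show ?thesis
      using sib_sep[OF fl(1)[OF y] fl(1)[OF z] d _ fl(2)[OF y] fl(2)[OF z]] by (simp add: g_def)
  qed
  have "\<exists>Q. fl n (F y) = Q \<and> fl n (F z) = Q \<and> rank n Q = Suc (rank n P)"
  proof (cases "\<exists>n. \<not> istop n (fl n z)")
    case ex: True
    then have nt: "\<not> istop n P" using Nz(3)[OF z ex] n by (simp add: N0_def P_def)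
    have "fl n (F z) = nxt P" using F_nxt[OF z] nt by (simp add: P_def)
    moreover have "fl n (F y) = nxt P" using F_nxt[OF y] nt e by (simp add: P_def)
    ultimately show ?thesis using rank_nxt by blast
  next
    case nex: False
    then have aP: "P = (2, Ht n 2 - 1)" using alltop[OF z] by (auto simp: P_def)
    have "parent n (fl (Suc n) y) = (2, Ht n 2 - 1)" using fl_parent[OF y] e aP by (simp add: P_def)
    then have "istop (Suc n) (fl (Suc n) y)" using parent_is_top2 fl(1)[OF y] by blast
    then have "snd (fl (Suc n) (F y)) = 0" using F_top[OF y] by blast
    then obtain a where "fl (Suc n) (F y) = (a, 0)" by (metis prod.collapse)
    then have "fl n (F y) = (0, 0)" using fl_parent[OF F_K[OF y], of n] parent_base by simp
    moreover have "fl n (F z) = (0, 0)" using F_alltop[OF z nex] zmin(2) by simp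
    moreover have "rank n (0, 0) = Suc (rank n P)"
      using aP Ht_pos[of n 2] by (simp add: rank_def off_def)
    ultimately show ?thesis by blast
  qed
  then obtain Q where Q: "fl n (F y) = Q" "fl n (F z) = Q" "rank n Q = Suc (rank n P)" by blast
  have "\<bar>F y - F z\<bar> \<le> Ln n Q" using K_dist[OF F_K[OF y] F_K[OF z], of n] Q by simp
  also have "\<dots> = th (Suc (rank n P))" using Q(3) by (simp add: Ln_def)
  also have "\<dots> \<le> th (rank n P) / (2 * (real n + 2) * real (Qn (Suc n)))"
    by (rule th_step[OF rank_ge[OF vP]]) simp
  also have "\<dots> = g / (real n + 2)" by (simp add: g_def Ln_def field_simps)
  also have "\<dots> \<le> \<bar>y - z\<bar> / (real n + 2)" using g by (simp add: divide_right_mono)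
  finally show ?thesis .
qed

lemma sep_close:
  assumes "z \<in> Kset" "y \<in> Kset" "\<bar>y - z\<bar> < sepb m" shows "fl m y = fl m z"
proof (rule ccontr)
  assume "fl m y \<noteq> fl m z"
  then have "sepb m \<le> \<bar>y - z\<bar>" using Iv_sep fl[OF assms(1)] fl[OF assms(2)] by blast
  then show False using assms(3) by simp
qed

lemma local_bound:
  assumes z: "z \<in> Kset" and y: "y \<in> Kset" and ne: "y \<noteq> z" and n0: "N0 z \<le> n0"
    and cl: "\<bar>y - z\<bar> < sepb n0"
  shows "\<bar>F y - F z\<bar> \<le> \<bar>y - z\<bar> / (real n0 + 2)"
proof -
  have ex: "\<exists>m. fl m y \<noteq> fl m z" using K_eq[OF y z] ne by blast
  define M where "M = (LEAST m. fl m y \<noteq> fl m z)"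
  have M1: "fl M y \<noteq> fl M z" unfolding M_def using ex by (rule LeastI_ex)
  have e0: "fl n0 y = fl n0 z" using sep_close[OF z y cl] .
  have "n0 < M"
  proof (rule ccontr)
    assume "\<not> n0 < M"
    then have "fl M y = fl M z" using fl_down[OF y z e0] by simp
    then show False using M1 by simp
  qed
  then obtain n where Mn: "M = Suc n" and nn: "n0 \<le> n" by (metis Suc_le_eq less_imp_Suc_add le_add1 Suc_le_mono)
  have en: "fl n y = fl n z" using not_less_Least[of n "\<lambda>m. fl m y \<noteq> fl m z"] Mn by (simp add: M_def)
  have "\<bar>F y - F z\<bar> \<le> \<bar>y - z\<bar> / (real n + 2)" using key_bound[OF z y _ en] n0 nn M1 Mn by simp
  also have "\<dots> \<le> \<bar>y - z\<bar> / (real n0 + 2)" using nn by (simp add: divide_left_mono)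
  finally show ?thesis .
qed

lemma F_deriv: assumes z: "z \<in> Kset" shows "has_rel_deriv F Kset z 0"
  unfolding has_rel_deriv_def Lim_within
proof (intro allI impI)
  fix e :: real assume e: "0 < e"
  define n0 where "n0 = N0 z + nat \<lceil>1 / e\<rceil>"
  have n0e: "1 / (real n0 + 2) < e"
  proof -
    have "1 / e \<le> real (nat \<lceil>1 / e\<rceil>)" by linarith
    also have "\<dots> < real n0 + 2" by (simp add: n0_def)
    finally have "1 / e < real n0 + 2" .
    then show ?thesis using e by (simp add: divide_less_eq field_simps)
  qed
  show "\<exists>d>0. \<forall>y\<in>Kset. 0 < dist y z \<and> dist y z < d \<longrightarrow> dist ((F y - F z) / (y - z)) 0 < e"
  proof (intro exI[of _ "sepb n0"] conjI ballI impI)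
    show "0 < sepb n0" by (rule sepb_pos)
    fix y assume y: "y \<in> Kset" and yd: "0 < dist y z \<and> dist y z < sepb n0"
    then have ne: "y \<noteq> z" and cl: "\<bar>y - z\<bar> < sepb n0" by (auto simp: dist_real_def)
    have b: "\<bar>F y - F z\<bar> \<le> \<bar>y - z\<bar> / (real n0 + 2)"
      using local_bound[OF z y ne _ cl] by (simp add: n0_def)
    have pos: "0 < \<bar>y - z\<bar>" using ne by simp
    have "dist ((F y - F z) / (y - z)) 0 = \<bar>F y - F z\<bar> / \<bar>y - z\<bar>" by (simp add: dist_real_def abs_divide)
    also have "\<dots> \<le> 1 / (real n0 + 2)" using b pos by (simp add: divide_le_eq field_simps)
    also have "\<dots> < e" by (rule n0e)
    finally show "dist ((F y - F z) / (y - z)) 0 < e" .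
  qed
qed

lemma F_cont: "continuous_on Kset F"
  unfolding continuous_on_iff
proof (intro ballI allI impI)
  fix z e :: real assume z: "z \<in> Kset" and e: "0 < e"
  show "\<exists>d>0. \<forall>y\<in>Kset. dist y z < d \<longrightarrow> dist (F y) (F z) < e"
  proof (intro exI[of _ "min e (sepb (N0 z))"] conjI ballI impI)
    show "0 < min e (sepb (N0 z))" using e sepb_pos by simp
    fix y assume y: "y \<in> Kset" and d: "dist y z < min e (sepb (N0 z))"
    show "dist (F y) (F z) < e"
    proof (cases "y = z")
      case True then show ?thesis using e by simp
    next
      case False
      have "\<bar>F y - F z\<bar> \<le> \<bar>y - z\<bar> / (real (N0 z) + 2)"
        using local_bound[OF z y False order_refl] d by (simp add: dist_real_def)
      also have "\<dots> \<le> \<bar>y - z\<bar>"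
        using mult_left_mono[of 1 "real (N0 z) + 2" "\<bar>y - z\<bar>"] by (simp add: divide_le_eq)
      also have "\<dots> < e" using d by (simp add: dist_real_def)
      finally show ?thesis by (simp add: dist_real_def)
    qed
  qed
qed

lemma F_surj: "F ` Kset = Kset"
proof
  show "F ` Kset \<subseteq> Kset" using F_K by blast
  have cl: "closed (F ` Kset)"
    using compact_continuous_image[OF F_cont K_compact] compact_imp_closed by blast
  show "Kset \<subseteq> F ` Kset"
  proof
    fix y assume y: "y \<in> Kset"
    have "y \<in> closure (F ` Kset)"
      unfolding closure_approachable
    proof (intro allI impI)
      fix e :: real assume e: "0 < e"
      obtain n where n: "(1/2::real) ^ n < e" using real_arch_pow_inv[OF e, of "1/2"] by auto
      obtain z where z: "z \<in> Kset" "fl n (F z) = fl n y" using F_hits[OF fl(1)[OF y]] by blast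
      have "\<bar>F z - y\<bar> \<le> Ln n (fl n (F z))" using K_dist[OF F_K[OF z(1)] y] z(2) by simp
      also have "\<dots> \<le> (1/2) ^ n" using Ln_le fl(1)[OF F_K[OF z(1)]] by blast
      finally show "\<exists>x\<in>F ` Kset. dist x y < e" using z(1) n by (intro bexI[of _ "F z"]) (auto simp: dist_real_def)
    qed
    then show "y \<in> F ` Kset" using cl closure_closed by metis
  qed
qed


lemma funpow_Suc_app: "(f ^^ Suc m) x = f ((f ^^ m) x)" by simp

lemma down_first:
  assumes z: "z \<in> Kset" shows "fl (m + Suc d) z = (a, p) \<Longrightarrow> p < Ht m 0 \<Longrightarrow> fl m z = (0, p)"
proof (induction d arbitrary: a)
  case 0
  then show ?case using fl_parent[OF z, of m] parent_first[of p m a] by simp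
next
  case (Suc d)
  have "p < Ht (m + Suc d) 0" using Suc.prems(2) Ht_mono[of m "m + Suc d"] by simp
  then have "fl (m + Suc d) z = (0, p)"
    using fl_parent[OF z, of "m + Suc d"] parent_first[of p "m + Suc d" a] Suc.prems(1) by simp
  then show ?case using Suc.IH Suc.prems(2) by blast
qed

lemma orbit_hits:
  assumes z: "z \<in> Kset" and V: "valid n V" shows "\<exists>m. fl n ((F ^^ m) z) = V"
proof -
  define L where "L = Suc (Suc n)"
  obtain a j where aj: "fl L z = (a, j)" by (cases "fl L z")
  have vj: "j < Ht L a" using fl(1)[OF z, of L] aj by (simp add: valid_def)
  define m0 where "m0 = Ht L a - 1 - j"
  have it0: "(F ^^ m0) z \<in> Kset \<and> fl L ((F ^^ m0) z) = (a, j + m0)"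
    using F_iter[OF z aj] vj by (simp add: m0_def)
  then have "istop L (fl L ((F ^^ m0) z))" using vj by (simp add: istop_def m0_def)
  then have s0: "snd (fl L ((F ^^ Suc m0) z)) = 0" using F_top it0 by simp
  define w where "w = (F ^^ Suc m0) z"
  have wK: "w \<in> Kset" using F_K it0 by (simp add: w_def)
  obtain c where c: "fl L w = (c, 0)" using s0 by (metis prod.collapse w_def)
  obtain tV iV where tV: "V = (tV, iV)" by (cases V)
  obtain p where p: "p < Ht (Suc n) 0" "parent n (0, p) = V" using child_exists V tV by blast
  have vc: "c < 3" using fl(1)[OF wK, of L] c by (simp add: valid_def)
  have "p < Ht L c" using p(1) Ht_mono[of "Suc n" L] Ht_ge0[OF vc, of L] by (simp add: L_def)
  then have it1: "(F ^^ p) w \<in> Kset \<and> fl L ((F ^^ p) w) = (c, p)" using F_iter[OF wK c] by simp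
  then have "fl (Suc n) ((F ^^ p) w) = (0, p)" using down_first[of _ "Suc n" 0 c p] p(1) by (simp add: L_def)
  then have "fl n ((F ^^ p) w) = V" using fl_parent[of "(F ^^ p) w" n] it1 p(2) by simp
  moreover have "(F ^^ p) w = (F ^^ (p + Suc m0)) z" by (simp only: w_def funpow_add comp_def)
  ultimately show ?thesis by metis
qed

lemma F_iter_K: "z \<in> Kset \<Longrightarrow> (F ^^ m) z \<in> Kset"
  by (induction m) (auto simp: F_K)

lemma F_minimal: "minimal_sys Kset F"
  unfolding minimal_sys_def
proof
  assume "\<exists>A. A \<noteq> {} \<and> A \<subset> Kset \<and> closedin (top_of_set Kset) A \<and> F ` A = A"
  then obtain A where A: "A \<noteq> {}" "A \<subset> Kset" "closedin (top_of_set Kset) A" "F ` A = A" by blast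
  obtain x where x: "x \<in> A" using A(1) by blast
  obtain y where y: "y \<in> Kset" "y \<notin> A" using A(2) by blast
  have op: "openin (top_of_set Kset) (Kset - A)" using A(3) by (simp add: closedin_def)
  obtain e where e: "0 < e" "\<forall>x'\<in>Kset. dist x' y < e \<longrightarrow> x' \<in> Kset - A"
    using op y unfolding openin_euclidean_subtopology_iff by blast
  obtain n where n: "(1/2::real) ^ n < e" using real_arch_pow_inv[OF e(1), of "1/2"] by auto
  obtain m where m: "fl n ((F ^^ m) x) = fl n y" using orbit_hits[OF _ fl(1)[OF y(1)]] x A(2) by blast
  have orb: "(F ^^ k) x \<in> A" for k
  proof (induction k)
    case 0 then show ?case using x by simp
  next
    case (Suc k) then show ?case using A(4) by auto
  qed
  have xK: "(F ^^ m) x \<in> Kset" using orb A(2) by blast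
  have "\<bar>(F ^^ m) x - y\<bar> \<le> Ln n (fl n ((F ^^ m) x))" using K_dist[OF xK y(1) m] .
  also have "\<dots> \<le> (1/2) ^ n" using Ln_le fl(1)[OF xK] by blast
  finally have "dist ((F ^^ m) x) y < e" using n by (simp add: dist_real_def)
  then show False using e(2) xK orb by blast
qed

lemma Wd0_eq: "Wd N 0 = replicate (N+2) 0 @ replicate (N+1) 1 @ [2]"
  by (simp add: Wd_def)

lemma PS_lo: "k \<le> N + 2 \<Longrightarrow> PS N 0 k = k * Ht N 0"
proof -
  assume k: "k \<le> N + 2"
  have "take k (Wd N 0) = take k (replicate (N+2) (0::nat)) @ take (k - (N+2)) (replicate (N+1) 1 @ [2])"
    by (simp only: Wd0_eq take_append length_replicate)
  also have "\<dots> = replicate k 0" using k by (simp del: replicate.simps add: min_def)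
  finally show ?thesis by (simp add: psum_def sum_list_replicate del: replicate.simps)
qed

lemma PS_hi: "d \<le> N + 1 \<Longrightarrow> PS N 0 (N + 2 + d) = (N + 2) * Ht N 0 + d * (Ht N 0 + 1)"
proof -
  assume d: "d \<le> N + 1"
  have t: "take d (replicate (N+1) (1::nat) @ [2]) = replicate d 1"
  proof -
    have "take d (replicate (N+1) (1::nat) @ [2]) = take d (replicate (N+1) 1) @ take (d - (N+1)) [2]"
      by (simp only: take_append length_replicate)
    also have "\<dots> = replicate d 1" using d by (simp del: replicate.simps add: min_def)
    finally show ?thesis .
  qed
  have "take (N + 2 + d) (Wd N 0) = replicate (N+2) 0 @ replicate d 1"
    using t by (simp del: replicate.simps add: Wd0_eq)
  then show ?thesis using Ht_1[of N] by (simp del: replicate.simps add: psum_def sum_list_replicate)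
qed

lemma WM_comb:
  assumes v: "valid n U1" "valid n V1" "valid n U2" "valid n V2"
  shows "\<exists>m\<ge>1. \<exists>z1\<in>Kset. \<exists>z2\<in>Kset. fl n z1 = U1 \<and> fl n ((F ^^ m) z1) = V1
            \<and> fl n z2 = U2 \<and> fl n ((F ^^ m) z2) = V2"
proof -
  define M where "M = Ht (Suc n) 0"
  have ce: "\<exists>p. p < M \<and> parent n (0, p) = U" if "valid n U" for U
    using child_exists[of n "fst U" "snd U"] that by (auto simp: M_def)
  obtain p1 where p1: "p1 < M" "parent n (0, p1) = U1" using ce v(1) by blast
  obtain q1 where q1: "q1 < M" "parent n (0, q1) = V1" using ce v(2) by blast
  obtain p2 where p2: "p2 < M" "parent n (0, p2) = U2" using ce v(3) by blast
  obtain q2 where q2: "q2 < M" "parent n (0, q2) = V2" using ce v(4) by blast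
  have M1: "1 \<le> M" using Ht_pos by (simp add: M_def Suc_leI)
  define N where "N = Suc n + 2 * M"
  define H where "H = Ht N 0"
  have MH: "M \<le> H" using Ht_mono[of "Suc n" N] by (simp add: N_def M_def H_def)
  have H1: "1 \<le> H" using M1 MH by simp
  define m where "m = (N + 1) * H + q1 + q2"
  have m1: "1 \<le> m" using H1 by (simp add: m_def)
  have pair: "\<exists>z\<in>Kset. fl n z = U \<and> fl n ((F ^^ m) z) = V"
    if U: "parent n (0, p) = U" "p < M" and V: "parent n (0, q) = V" "q < M"
      and rdef: "p + m = (N + 1) * H + r + q" and kb: "r \<le> 2 * M - 2"
    for U V p q r
  proof -
    define k where "k = Suc r"
    have k: "k = Suc r" by (simp add: k_def)
    have rN: "r \<le> N + 1" using kb by (simp add: N_def)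
    have k1: "k \<le> N + 2" using k rN by simp
    have PSk: "PS N 0 k = k * H" using PS_lo[OF k1] by (simp add: H_def)
    have PSk2: "PS N 0 (k + N + 1) = (N + 2) * H + r * (H + 1)"
      using PS_hi[OF rN] k by (simp add: H_def algebra_simps)
    have klen: "k < 2 * N + 4" "k + N + 1 < 2 * N + 4" using k rN by simp_all
    have g1: "Ht N 0 \<le> Ht N (Wd N 0 ! k)" by (rule Ht_ge0, rule Wd_nth_lt3) (use klen in \<open>simp add: Wd_len\<close>)
    have g2: "Ht N 0 \<le> Ht N (Wd N 0 ! (k + N + 1))" by (rule Ht_ge0, rule Wd_nth_lt3) (use klen in \<open>simp add: Wd_len\<close>)
    have hk: "p < Ht N (Wd N 0 ! k)" "q < Ht N (Wd N 0 ! (k + N + 1))"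
      using U(2) V(2) MH g1 g2 by (simp_all add: H_def)
    have le1: "PS N 0 k + Ht N (Wd N 0 ! k) \<le> Ht (Suc N) 0" using PS_le[OF klen(1)] .
    have le2: "PS N 0 (k+N+1) + Ht N (Wd N 0 ! (k+N+1)) \<le> Ht (Suc N) 0" using PS_le[OF klen(2)] .
    define x where "x = PS N 0 k + p"
    have vx: "valid (Suc N) (0, x)" using le1 hk(1) by (simp add: valid_def x_def)
    obtain z where z: "z \<in> Kset" "fl (Suc N) z = (0, x)" using piece_nonempty[OF vx] by blast
    have eq: "x + m = PS N 0 (k + N + 1) + q"
      using PSk PSk2 rdef k by (simp add: x_def algebra_simps)
    have lt: "x + m < Ht (Suc N) 0" using eq le2 hk(2) by simp
    have it: "(F ^^ m) z \<in> Kset" "fl (Suc N) ((F ^^ m) z) = (0, PS N 0 (k + N + 1) + q)"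
      using F_iter[OF z(1) z(2), of m] lt eq by auto
    have Nd: "N = Suc n + Suc (2 * M - 1)" using M1 by (simp add: N_def)
    have a1: "fl N z = (Wd N 0 ! k, p)"
      using fl_parent[OF z(1), of N] z(2) parent_pos[OF klen(1) hk(1)] by (simp add: x_def)
    have "fl (Suc n) z = (0, p)" using down_first[OF z(1), of "Suc n" "2 * M - 1"] a1 Nd U(2)
      by (simp add: M_def)
    then have r1: "fl n z = U" using fl_parent[OF z(1), of n] U(1) by simp
    have a2: "fl N ((F ^^ m) z) = (Wd N 0 ! (k + N + 1), q)"
      using fl_parent[OF it(1), of N] it(2) parent_pos[OF klen(2) hk(2)] by simp
    have "fl (Suc n) ((F ^^ m) z) = (0, q)"
      using down_first[OF it(1), of "Suc n" "2 * M - 1"] a2 Nd V(2) by (simp add: M_def)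
    then have r2: "fl n ((F ^^ m) z) = V" using fl_parent[OF it(1), of n] V(1) by simp
    show ?thesis using r1 r2 z(1) by blast
  qed
  have b1: "q2 + p1 \<le> 2 * M - 2" "q1 + p2 \<le> 2 * M - 2" using p1(1) q2(1) q1(1) p2(1) by linarith+
  obtain z1 where z1: "z1 \<in> Kset" "fl n z1 = U1" "fl n ((F ^^ m) z1) = V1"
    using pair[OF p1(2) p1(1) q1(2) q1(1), of "q2 + p1"] b1(1) by (auto simp: m_def)
  obtain z2 where z2: "z2 \<in> Kset" "fl n z2 = U2" "fl n ((F ^^ m) z2) = V2"
    using pair[OF p2(2) p2(1) q2(2) q2(1), of "q1 + p2"] b1(2) by (auto simp: m_def)
  show ?thesis using z1 z2 m1 by blast
qed


lemma G_iter: "((\<lambda>(x, y). (F x, F y)) ^^ m) (a, b) = ((F ^^ m) a, (F ^^ m) b)"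
  by (induction m) auto

lemma half_pow_mono: "n0 \<le> n \<Longrightarrow> (1/2::real) ^ n \<le> (1/2) ^ n0"
  by (rule power_decreasing) auto

lemma open_pieces:
  assumes W: "openin (top_of_set (Kset \<times> Kset)) W" and u: "(u1, u2) \<in> W"
  shows "\<exists>n0. \<forall>n\<ge>n0. \<forall>a\<in>Kset. \<forall>b\<in>Kset. fl n a = fl n u1 \<and> fl n b = fl n u2 \<longrightarrow> (a, b) \<in> W"
proof -
  have sub: "W \<subseteq> Kset \<times> Kset" and
    ex: "\<exists>e>0. \<forall>x'\<in>Kset \<times> Kset. dist x' (u1, u2) < e \<longrightarrow> x' \<in> W"
    using W u unfolding openin_euclidean_subtopology_iff by blast+
  obtain e where e: "0 < e" "\<forall>x'\<in>Kset \<times> Kset. dist x' (u1, u2) < e \<longrightarrow> x' \<in> W" using ex by blast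
  have uK: "u1 \<in> Kset" "u2 \<in> Kset" using sub u by auto
  obtain n0 where n0: "(1/2::real) ^ n0 < e / 2" using real_arch_pow_inv[of "e/2" "1/2"] e(1) by auto
  show ?thesis
  proof (intro exI[of _ n0] allI impI ballI)
    fix n a b assume n: "n0 \<le> n" and a: "a \<in> Kset" and b: "b \<in> Kset"
      and fab: "fl n a = fl n u1 \<and> fl n b = fl n u2"
    have da: "dist a u1 < e / 2"
    proof -
      have "\<bar>a - u1\<bar> \<le> Ln n (fl n a)" using K_dist[OF a uK(1)] fab by simp
      also have "\<dots> \<le> (1/2) ^ n" using Ln_le fl(1)[OF a] by blast
      also have "\<dots> \<le> (1/2) ^ n0" using half_pow_mono[OF n] .
      finally show ?thesis using n0 by (simp add: dist_real_def)
    qed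
    have db: "dist b u2 < e / 2"
    proof -
      have "\<bar>b - u2\<bar> \<le> Ln n (fl n b)" using K_dist[OF b uK(2)] fab by simp
      also have "\<dots> \<le> (1/2) ^ n" using Ln_le fl(1)[OF b] by blast
      also have "\<dots> \<le> (1/2) ^ n0" using half_pow_mono[OF n] .
      finally show ?thesis using n0 by (simp add: dist_real_def)
    qed
    have "dist (a, b) (u1, u2) \<le> dist a u1 + dist b u2"
      unfolding dist_Pair_Pair by (rule sqrt_sum_squares_le_sum) auto
    then have "dist (a, b) (u1, u2) < e" using da db by simp
    then show "(a, b) \<in> W" using e(2) a b by blast
  qed
qed

lemma F_wm: "weakly_mixing Kset F"
  unfolding weakly_mixing_def transitive_sys_def
proof (intro allI impI)
  fix U V assume a: "openin (top_of_set (Kset \<times> Kset)) U \<and> U \<noteq> {} \<and>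
       openin (top_of_set (Kset \<times> Kset)) V \<and> V \<noteq> {}"
  obtain u1 u2 where u: "(u1, u2) \<in> U" using a by auto
  obtain v1 v2 where v: "(v1, v2) \<in> V" using a by auto
  have uK: "u1 \<in> Kset" "u2 \<in> Kset" using a u openin_subset[of "top_of_set (Kset \<times> Kset)" U] by auto
  have vK: "v1 \<in> Kset" "v2 \<in> Kset" using a v openin_subset[of "top_of_set (Kset \<times> Kset)" V] by auto
  obtain nU where nU: "\<forall>n\<ge>nU. \<forall>x\<in>Kset. \<forall>y\<in>Kset. fl n x = fl n u1 \<and> fl n y = fl n u2 \<longrightarrow> (x, y) \<in> U"
    using open_pieces[of U u1 u2] a u by blast
  obtain nV where nV: "\<forall>n\<ge>nV. \<forall>x\<in>Kset. \<forall>y\<in>Kset. fl n x = fl n v1 \<and> fl n y = fl n v2 \<longrightarrow> (x, y) \<in> V"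
    using open_pieces[of V v1 v2] a v by blast
  define n where "n = max nU nV"
  obtain m z1 z2 where m: "1 \<le> m" "z1 \<in> Kset" "z2 \<in> Kset" "fl n z1 = fl n u1" "fl n ((F ^^ m) z1) = fl n v1"
    "fl n z2 = fl n u2" "fl n ((F ^^ m) z2) = fl n v2"
    using WM_comb[OF fl(1)[OF uK(1)] fl(1)[OF vK(1)] fl(1)[OF uK(2)] fl(1)[OF vK(2)]] by blast
  have "nU \<le> n" "nV \<le> n" by (simp_all add: n_def)
  then have "(z1, z2) \<in> U" "((F ^^ m) z1, (F ^^ m) z2) \<in> V"
    using nU nV m F_iter_K by blast+
  then have "((\<lambda>(x, y). (F x, F y)) ^^ m) (z1, z2) \<in> ((\<lambda>(x, y). (F x, F y)) ^^ m) ` U"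
    "((\<lambda>(x, y). (F x, F y)) ^^ m) (z1, z2) \<in> V"
    by (blast intro: imageI, simp add: G_iter)
  then have "((\<lambda>(x, y). (F x, F y)) ^^ m) (z1, z2) \<in> ((\<lambda>(x, y). (F x, F y)) ^^ m) ` U \<inter> V"
    by blast
  then show "\<exists>n. 1 \<le> n \<and> ((\<lambda>(x, y). (F x, F y)) ^^ n) ` U \<inter> V \<noteq> {}" using m(1) by blast
qed

lemma K_td: "totally_disconnected Kset"
  unfolding totally_disconnected_def
proof (intro allI impI ballI)
  fix C a b assume C: "C \<subseteq> Kset \<and> connected C" and a: "a \<in> C" and b: "b \<in> C"
  have gap: "False" if ab: "x < y" "x \<in> C" "y \<in> C" for x y
  proof -
    have xK: "x \<in> Kset" and yK: "y \<in> Kset" using ab C by auto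
    obtain m where m: "fl m x \<noteq> fl m y" using K_eq[OF xK yK] ab(1) by fastforce
    define P where "P = fl m x"
    define r where "r = lft m P + Ln m P"
    have vP: "valid m P" using fl(1)[OF xK] by (simp add: P_def)
    have xr: "x \<le> r" "lft m P \<le> x" using fl(2)[OF xK, of m] by (auto simp: r_def P_def Iv_def)
    have yr: "r < y"
    proof (rule ccontr)
      assume "\<not> r < y"
      then have "y \<in> Iv m P" using xr ab(1) by (auto simp: Iv_def r_def)
      then have "fl m y = P" using fl_eq[OF vP] by blast
      then show False using m by (simp add: P_def)
    qed
    define dd where "dd = min (sepb m) (y - r)"
    define c where "c = r + dd / 2"
    have sp: "0 < sepb m" by (rule sepb_pos)
    have d: "0 < dd" "dd \<le> y - r" "dd \<le> sepb m"
      using yr sp by (auto simp: dd_def)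
    have c1a: "x < c" unfolding c_def using d xr by linarith
    have c1b: "c < y" unfolding c_def using d xr by linarith
    note c1 = c1a c1b
    have "c \<notin> Kset"
    proof
      assume cK: "c \<in> Kset"
      show False
      proof (cases "fl m c = P")
        case True
        then have "c \<le> r" using fl(2)[OF cK, of m] by (simp add: Iv_def r_def)
        then show False using d unfolding c_def by linarith
      next
        case False
        have "r \<in> Iv m P" using Ln_pos[of m P] by (simp add: Iv_def r_def)
        then have "sepb m \<le> \<bar>r - c\<bar>" using Iv_sep[OF vP fl(1)[OF cK] False[symmetric]] fl(2)[OF cK] by blast
        moreover have "\<bar>r - c\<bar> < sepb m" using d unfolding c_def by simp
        ultimately show False by simp
      qed
    qed
    moreover have "c \<in> C" using C ab c1 unfolding connected_iff_interval by (meson less_imp_le)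
    ultimately show False using C by blast
  qed
  show "a = b"
  proof (rule ccontr)
    assume "a \<noteq> b"
    then have "a < b \<or> b < a" by linarith
    then show False using gap a b by blast
  qed
qed

lemma K_perfect: "x \<in> Kset \<Longrightarrow> x islimpt Kset"
  unfolding islimpt_approachable
proof (intro allI impI)
  fix e :: real assume x: "x \<in> Kset" and e: "0 < e"
  obtain n where n: "(1/2::real) ^ n < e" using real_arch_pow_inv[OF e, of "1/2"] by auto
  define P where "P = fl n x"
  have vP: "valid n P" using fl(1)[OF x] by (simp add: P_def)
  define s where "s = snd (child n P)"
  have c0: "child n P = (0, s)" by (simp add: child_def s_def)
  have v0: "valid (Suc n) (0, s)" using child(1)[OF vP] c0 by simp
  have v2: "valid (Suc n) (2, s)" using v0 Ht_2[of "Suc n"] by (simp add: valid_def)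
  have p0: "parent n (0, s) = P" using child(2)[OF vP] c0 by simp
  have p2: "parent n (2, s) = P" using child(4)[OF vP] by (simp add: s_def)
  obtain y1 where y1: "y1 \<in> Kset" "fl (Suc n) y1 = (0, s)" using piece_nonempty[OF v0] by blast
  obtain y2 where y2: "y2 \<in> Kset" "fl (Suc n) y2 = (2, s)" using piece_nonempty[OF v2] by blast
  have f1: "fl n y1 = P" using fl_parent[OF y1(1), of n] y1(2) p0 by simp
  have f2: "fl n y2 = P" using fl_parent[OF y2(1), of n] y2(2) p2 by simp
  have ne: "y1 \<noteq> y2" using y1(2) y2(2) by auto
  have close: "dist y x < e" if "y \<in> Kset" "fl n y = P" for y
  proof -
    have "\<bar>y - x\<bar> \<le> Ln n (fl n y)" using K_dist[OF that(1) x] that(2) by (simp add: P_def)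
    also have "\<dots> \<le> (1/2) ^ n" using Ln_le fl(1)[OF that(1)] by blast
    finally show ?thesis using n by (simp add: dist_real_def)
  qed
  show "\<exists>x'\<in>Kset. x' \<noteq> x \<and> dist x' x < e"
  proof (cases "y1 = x")
    case True
    then show ?thesis using y2(1) ne close[OF y2(1) f2] by (intro bexI[of _ y2]) auto
  next
    case False
    then show ?thesis using y1(1) close[OF y1(1) f1] by blast
  qed
qed

lemma K_cantor: "cantor_set Kset"
  unfolding cantor_set_def using zmin(1) K_compact K_td K_perfect by blast

lemma F_homeo: "homeo_of Kset F"
  unfolding homeo_of_def using homeomorphism_compact[OF K_compact F_cont F_surj F_inj] by blast

lemma F_conj: "conjugate Kset F Kset F"
  unfolding conjugate_def using homeomorphism_ident[of Kset] by force

theorem theoremB: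
  shows "\<exists>(X::real set) (T::real \<Rightarrow> real) (K::real set) (f::real \<Rightarrow> real).
           cantor_set X \<and> homeo_of X T \<and> minimal_sys X T \<and> weakly_mixing X T \<and>
           cantor_set K \<and> homeo_of K f \<and> conjugate X T K f \<and>
           (\<forall>x\<in>K. has_rel_deriv f K x 0)"
  using K_cantor F_homeo F_minimal F_wm F_conj F_deriv by blast


end
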